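(* Let $g=e^{-\psi}\colon\mathbb R^d\to[0,+\infty)$ satisfy the Basic Assumptions, let $m=\min\psi$, and assume $\psi(0)<m+1$. Then $\operatorname{supp}g$ is a star-like set with respect to $g$. Moreover, if $U\subset\mathbb R^d$ satisfies $\inf_{x\in U\cap\operatorname{supp}g}g(x)>0$, then the set $\{((u,g(u)),\bar v)\in\widetilde{\mathcal{CP}}(g,g):u\in U\}$ is bounded in $\mathbb R^{d+1}\times\mathbb R^{d+1}$.
   Context: $\operatorname{supp}g=\{x:g(x)>0\}$. Basic Assumptions: $g$ upper semi-continuous, log-concave, with finite positive integral, $\operatorname{supp}g$ bounded, origin in interior of $\operatorname{supp}g$. Lifting $\mathrm{lift}(f)=\{(x,y)\in\mathbb R^d\times\mathbb R:x\in\overline{\operatorname{supp}f},|y|\le f(x)\}$. Fréchet normal cone $N_A(a_0)=\{v:\forall\varepsilon>0\,\exists\delta>0:\langle v,a-a_0\rangle\le\varepsilon|a-a_0|\ \forall a\in A,|a-a_0|\le\delta\}$. Contact pairs $\mathcal{CP}(f,g)=\{(\bar u,\bar v):\bar u=(u,f(u)),u\in\overline{\operatorname{supp}f}\cap\overline{\operatorname{supp}g},f(u)=g(u),\bar v\in N_{\mathrm{lift}(f)}(\bar u)\cap N_{\mathrm{lift}(g)}(\bar u),\langle\bar v,\bar u\rangle=1\}$; reduced set $\widetilde{\mathcal{CP}}(f,g)$: those pairs with $f(u)\ne0$, or with $f(u)=g(u)=0$ and $\bar v=(v,0)$. Star-like: $U$ is star-like w.r.t. $g$ if for every $u\in U\cap\operatorname{supp}g$,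 $\langle(u,g(u)),\bar v\rangle>0$ for all nonzero $\bar v\in N_{\mathrm{lift}(g)}((u,g(u)))$. *)

theory Defs
  imports "HOL-Analysis.Analysis"
begin

text \<open>R^d is modelled by a Euclidean space 'a, R^(d+1) by 'a \<times> real.\<close>

definition supp :: "('a \<Rightarrow> real) \<Rightarrow> 'a set" where
  "supp g = {x. g x > 0}"

definition usc :: "('a::topological_space \<Rightarrow> real) \<Rightarrow> bool" where
  "usc g \<longleftrightarrow> (\<forall>a. open {x. g x < a})"

definition log_concave :: "('a::real_vector \<Rightarrow> real) \<Rightarrow> bool" where
  "log_concave g \<longleftrightarrow> (\<forall>x y t. 0 < t \<and> t < 1 \<longrightarrow>
      g ((1 - t) *\<^sub>R x + t *\<^sub>R y) \<ge> g x powr (1 - t) * g y powr t)"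

definition basic_assumptions :: "('a::euclidean_space \<Rightarrow> real) \<Rightarrow> bool" where
  "basic_assumptions g \<longleftrightarrow>
     (\<forall>x. g x \<ge> 0) \<and> usc g \<and> log_concave g \<and>
     g integrable_on UNIV \<and> integral UNIV g > 0 \<and>
     bounded (supp g) \<and> 0 \<in> interior (supp g)"

definition psi :: "('a \<Rightarrow> real) \<Rightarrow> 'a \<Rightarrow> ereal" where
  "psi g x = (if g x > 0 then ereal (- ln (g x)) else \<infinity>)"

definition lift :: "('a::topological_space \<Rightarrow> real) \<Rightarrow> ('a \<times> real) set" where
  "lift f = {(x, y). x \<in> closure (supp f) \<and> \<bar>y\<bar> \<le> f x}"

definition normal_cone :: "'b::real_inner set \<Rightarrow> 'b \<Rightarrow> 'b set" where
  "normal_cone A a0 = {v. \<forall>\<epsilon>>0. \<exists>\<delta>>0. \<forall>a\<in>A. norm (a - a0) \<le> \<delta> \<longrightarrow>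
        inner v (a - a0) \<le> \<epsilon> * norm (a - a0)}"

definition contact_pairs ::
  "('a::euclidean_space \<Rightarrow> real) \<Rightarrow> ('a \<Rightarrow> real) \<Rightarrow> (('a \<times> real) \<times> ('a \<times> real)) set" where
  "contact_pairs f g = {(ub, vb). \<exists>u. ub = (u, f u) \<and>
       u \<in> closure (supp f) \<inter> closure (supp g) \<and> f u = g u \<and>
       vb \<in> normal_cone (lift f) ub \<inter> normal_cone (lift g) ub \<and> inner vb ub = 1}"

definition reduced_contact_pairs ::
  "('a::euclidean_space \<Rightarrow> real) \<Rightarrow> ('a \<Rightarrow> real) \<Rightarrow> (('a \<times> real) \<times> ('a \<times> real)) set" where
  "reduced_contact_pairs f g = {(ub, vb) \<in> contact_pairs f g.
       f (fst ub) \<noteq> 0 \<or> (f (fst ub) = 0 \<and> g (fst ub) = 0 \<and> snd vb = 0)}"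

definition star_like :: "'a::euclidean_space set \<Rightarrow> ('a \<Rightarrow> real) \<Rightarrow> bool" where
  "star_like U g \<longleftrightarrow> (\<forall>u \<in> U \<inter> supp g. \<forall>vb \<in> normal_cone (lift g) (u, g u).
       vb \<noteq> 0 \<longrightarrow> inner (u, g u) vb > 0)"

end

theory Submission
  imports Defs
begin

lemma normal_seg:
  fixes vb :: "'b::real_inner"
  assumes vb: "vb \<in> normal_cone A a0" and t0: "t0 > 0"
    and seg: "\<And>t. 0 < t \<Longrightarrow> t \<le> t0 \<Longrightarrow> a0 + t *\<^sub>R d \<in> A"
  shows "inner vb d \<le> 0"
proof (rule ccontr)
  assume "\<not> inner vb d \<le> 0"
  hence p: "inner vb d > 0" by simp
  hence dn: "d \<noteq> 0" by auto
  hence nd: "norm d > 0" by simp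
  define e where "e = inner vb d / (2 * norm d)"
  have e: "e > 0" using p nd by (simp add: e_def)
  from vb e obtain \<delta> where \<delta>: "\<delta> > 0" and H: "\<And>a. a \<in> A \<Longrightarrow> norm (a - a0) \<le> \<delta> \<Longrightarrow>
      inner vb (a - a0) \<le> e * norm (a - a0)"
    unfolding normal_cone_def by blast
  define t where "t = min t0 (\<delta> / norm d)"
  have t: "t > 0" "t \<le> t0" using t0 \<delta> nd by (auto simp: t_def)
  have "norm ((a0 + t *\<^sub>R d) - a0) = t * norm d" using t by simp
  also have "\<dots> \<le> \<delta>" using nd t_def by (simp add: min_def field_simps split: if_splits)
  finally have "inner vb ((a0 + t *\<^sub>R d) - a0) \<le> e * norm ((a0 + t *\<^sub>R d) - a0)"
    using H seg[OF t] by blast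
  hence "t * inner vb d \<le> e * (t * norm d)" using t by simp
  hence "inner vb d \<le> e * norm d" using t by (simp add: mult.left_commute)
  also have "\<dots> = inner vb d / 2" using nd by (simp add: e_def)
  finally show False using p by simp
qed

lemma s_nonneg:
  assumes gu: "g u > 0" and vb: "(v, s) \<in> normal_cone (lift g) (u, g u)"
  shows "s \<ge> 0"
proof -
  have "inner (v, s) (0, -1::real) \<le> 0"
  proof (rule normal_seg[OF vb gu])
    fix t :: real assume "0 < t" "t \<le> g u"
    moreover have "u \<in> supp g" using gu by (simp add: supp_def)
    hence "u \<in> closure (supp g)" using closure_subset by blast
    ultimately show "(u, g u) + t *\<^sub>R (0, -1) \<in> lift g" by (auto simp: lift_def)
  qed
  thus ?thesis by simp
qed

lemma key:
  fixes g :: "'a::euclidean_space \<Rightarrow> real"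
  assumes lc: "log_concave g" and gu: "g u > 0" and gw: "g w > 0"
    and vb: "(v, s) \<in> normal_cone (lift g) (u, g u)"
  shows "inner v (w - u) + s * (g u * (ln (g w) - ln (g u))) \<le> 0"
proof -
  define L where "L = ln (g w) - ln (g u)"
  have "inner (v, s) (w - u, g u * L) \<le> 0"
  proof (rule normal_seg[OF vb])
    show "1 / (\<bar>L\<bar> + 2) > 0" by simp
    fix t :: real assume t: "0 < t" "t \<le> 1 / (\<bar>L\<bar> + 2)"
    have tt: "t * (\<bar>L\<bar> + 2) \<le> 1" using t by (simp add: pos_le_divide_eq)
    hence tt2: "t * \<bar>L\<bar> + 2 * t \<le> 1" by (simp add: distrib_left)
    have "t * \<bar>L\<bar> \<ge> 0" using t by simp
    hence t1: "t < 1" and tL: "t * \<bar>L\<bar> < 1" using tt2 t by linarith+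
    define x where "x = (1 - t) *\<^sub>R u + t *\<^sub>R w"
    have "g x \<ge> g u powr (1 - t) * g w powr t"
      using lc t t1 unfolding log_concave_def x_def by blast
    also have "g u powr (1 - t) * g w powr t = g u * exp (t * L)"
    proof -
      have "g u powr (1 - t) * g w powr t = exp ((1 - t) * ln (g u)) * exp (t * ln (g w))"
        using gu gw by (simp add: powr_def)
      also have "\<dots> = exp (ln (g u) + t * L)" by (simp add: L_def flip: exp_add; simp add: algebra_simps)
      also have "\<dots> = g u * exp (t * L)" using gu by (simp add: exp_add)
      finally show ?thesis .
    qed
    also have "g u * exp (t * L) \<ge> g u * (1 + t * L)"
      using gu exp_ge_add_one_self[of "t*L"] by simp
    finally have A: "g u * (1 + t * L) \<le> g x" by linarith
    have B: "0 \<le> g u * (1 + t * L)" using gu tL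
      proof -
      have "t * (- L) \<le> t * \<bar>L\<bar>" using t by (intro mult_left_mono) auto
      hence "- (t * L) \<le> t * \<bar>L\<bar>" by simp
      hence "0 \<le> 1 + t * L" using tL by linarith
      thus ?thesis using gu by simp
    qed
    have gx: "g x > 0" using gu gw t t1
      proof -
      have "g u powr (1 - t) * g w powr t > 0" using gu gw by simp
      thus ?thesis using \<open>g u powr (1 - t) * g w powr t \<le> g x\<close> by linarith
    qed
    have "x \<in> supp g" using gx by (simp add: supp_def)
    hence "x \<in> closure (supp g)" using closure_subset by blast
    moreover have "(u, g u) + t *\<^sub>R (w - u, g u * L) = (x, g u * (1 + t * L))"
      by (simp add: x_def algebra_simps)
    ultimately show "(u, g u) + t *\<^sub>R (w - u, g u * L) \<in> lift g"
      using A B by (auto simp: lift_def)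
  qed
  thus ?thesis by (simp add: L_def)
qed


lemma supp_convex:
  assumes lc: "log_concave g"
  shows "convex (supp g)"
proof (rule convexI)
  fix x y :: 'a and a b :: real
  assume x: "x \<in> supp g" and y: "y \<in> supp g" and ab: "0 \<le> a" "0 \<le> b" "a + b = 1"
  show "a *\<^sub>R x + b *\<^sub>R y \<in> supp g"
  proof (cases "b = 0 \<or> b = 1")
    case True
    thus ?thesis using x y ab by auto
  next
    case False
    hence b: "0 < b" "b < 1" using ab by auto
    have a: "a = 1 - b" using ab by simp
    have "g (a *\<^sub>R x + b *\<^sub>R y) \<ge> g x powr (1 - b) * g y powr b"
      using lc b unfolding log_concave_def a by blast
    moreover have "g x powr (1 - b) * g y powr b > 0" using x y by (simp add: supp_def)
    ultimately show ?thesis by (simp add: supp_def)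
  qed
qed

lemma key0:
  fixes g :: "'a::euclidean_space \<Rightarrow> real"
  assumes lc: "log_concave g" and nn: "\<forall>x. g x \<ge> 0" and u: "u \<in> closure (supp g)"
    and gu: "g u = 0" and w: "w \<in> supp g"
    and vb: "(v, s) \<in> normal_cone (lift g) (u, g u)"
  shows "inner v (w - u) \<le> 0"
proof -
  have cc: "convex (closure (supp g))" using supp_convex[OF lc] by simp
  have wc: "w \<in> closure (supp g)" using w closure_subset by blast
  have "inner (v, s) (w - u, 0::real) \<le> 0"
  proof (rule normal_seg[OF vb])
    show "(1::real) > 0" by simp
    fix t :: real assume t: "0 < t" "t \<le> 1"
    have "(1 - t) *\<^sub>R u + t *\<^sub>R w \<in> closure (supp g)"
      using convexD[OF cc u wc, of "1 - t" t] t by simp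
    moreover have "(u, g u) + t *\<^sub>R (w - u, 0) = ((1 - t) *\<^sub>R u + t *\<^sub>R w, 0)"
      using gu by (simp add: algebra_simps)
    ultimately show "(u, g u) + t *\<^sub>R (w - u, 0) \<in> lift g"
      using nn by (auto simp: lift_def)
  qed
  thus ?thesis by simp
qed

lemma get_m:
  assumes "psi g 0 < (INF x. psi g x) + 1" and g0: "g 0 > 0"
  obtains m where "\<And>x. g x > 0 \<Longrightarrow> m \<le> - ln (g x)" "- ln (g 0) < m + 1"
proof -
  define I where "I = (INF x. psi g x)"
  have le: "\<And>x. I \<le> psi g x" unfolding I_def by (rule INF_lower) simp
  have p0: "psi g 0 = ereal (- ln (g 0))" using g0 by (simp add: psi_def)
  have lt: "ereal (- ln (g 0)) < I + 1" using assms(1) p0 by (simp add: I_def)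
  show ?thesis
  proof (cases I)
    case (real r)
    show ?thesis
    proof (rule that[of r])
      fix x assume "g x > 0"
      hence "psi g x = ereal (- ln (g x))" by (simp add: psi_def)
      thus "r \<le> - ln (g x)" using le[of x] real by simp
    next
      show "- ln (g 0) < r + 1" using lt real by simp
    qed
  next
    case PInf
    thus ?thesis using le[of 0] p0 by simp
  next
    case MInf
    thus ?thesis using lt by simp
  qed
qed

theorem mainTheorem16:
  fixes g :: "'a::euclidean_space \<Rightarrow> real"
  assumes "basic_assumptions g"
    and "psi g 0 < (INF x. psi g x) + 1"
  shows "star_like (supp g) g \<and>
    (\<forall>U::'a set. (\<exists>c>0. \<forall>x\<in>U \<inter> supp g. c \<le> g x) \<longrightarrow>
       bounded {(ub, vb) \<in> reduced_contact_pairs g g. fst ub \<in> U})"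
proof -
  have nn: "\<forall>x. g x \<ge> 0" and lc: "log_concave g" and bnd: "bounded (supp g)"
    and int0: "0 \<in> interior (supp g)"
    using assms(1) unfolding basic_assumptions_def by auto
  have g0: "g 0 > 0" using int0 interior_subset by (force simp: supp_def)
  obtain m where m: "\<And>x. g x > 0 \<Longrightarrow> m \<le> - ln (g x)" and m0: "- ln (g 0) < m + 1"
    using get_m[OF assms(2) g0] by blast
  define \<alpha> where "\<alpha> = 1 + ln (g 0) + m"
  have \<alpha>: "\<alpha> > 0" using m0 by (simp add: \<alpha>_def)
  obtain r where r: "r > 0" "ball 0 r \<subseteq> supp g" using int0 mem_interior by blast
  have lnb: "\<And>u. g u > 0 \<Longrightarrow> ln (g 0) - ln (g u) \<ge> \<alpha> - 1"
    using m by (simp add: \<alpha>_def)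
  have part1: "star_like (supp g) g"
    unfolding star_like_def
  proof (intro ballI impI)
    fix u and vb :: "'a \<times> real"
    assume u: "u \<in> supp g \<inter> supp g" and vb: "vb \<in> normal_cone (lift g) (u, g u)" and nz: "vb \<noteq> 0"
    obtain v s where vs: "vb = (v, s)" by (cases vb)
    have gu: "g u > 0" using u by (simp add: supp_def)
    have s: "s \<ge> 0" using s_nonneg[of g u v s] gu vb vs by simp
    show "inner (u, g u) vb > 0"
    proof (cases "s = 0")
      case False
      hence sp: "s > 0" using s by simp
      have k: "inner v (0 - u) + s * (g u * (ln (g 0) - ln (g u))) \<le> 0"
        using key[OF lc gu g0] vb vs by simp
      have "s * g u * (ln (g 0) - ln (g u)) > s * g u * (- 1)"
        using lnb[OF gu] \<alpha> sp gu by (intro mult_strict_left_mono) auto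
      thus ?thesis using k vs by (simp add: inner_commute algebra_simps)
    next
      case True
      hence v: "v \<noteq> 0" using nz vs by (auto simp: zero_prod_def)
      define w where "w = (r / 2 / norm v) *\<^sub>R v"
      have "norm w = r / 2" using v r by (simp add: w_def)
      hence "w \<in> ball 0 r" using r by simp
      hence gw: "g w > 0" using r by (auto simp: supp_def)
      have k: "inner v (w - u) + s * (g u * (ln (g w) - ln (g u))) \<le> 0"
        using key[OF lc gu gw] vb vs by simp
      have "inner v w = r / 2 * norm v" using v by (simp add: w_def power2_norm_eq_inner[symmetric] power2_eq_square)
      moreover have "r / 2 * norm v > 0" using v r by simp
      ultimately have "inner v w > 0" by simp
      thus ?thesis using k vs True by (simp add: inner_commute inner_diff_right)
    qed
  qed
  have part2: "bounded {(ub, vb) \<in> reduced_contact_pairs g g. fst ub \<in> U}"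
    if cU: "\<exists>c>0. \<forall>x\<in>U \<inter> supp g. c \<le> g x" for U :: "'a set"
  proof -
    obtain c where c: "c > 0" "\<And>x. x \<in> U \<Longrightarrow> x \<in> supp g \<Longrightarrow> c \<le> g x" using cU by blast
    define \<rho> where "\<rho> = r / 2"
    have \<rho>: "\<rho> > 0" using r by (simp add: \<rho>_def)
    define F where "F = (\<lambda>b. \<rho> *\<^sub>R b) ` Basis \<union> (\<lambda>b. - (\<rho> *\<^sub>R b)) ` (Basis :: 'a set)"
    have Fs: "F \<subseteq> supp g"
    proof
      fix w assume "w \<in> F"
      hence "norm w = \<rho>" using \<rho> by (auto simp: F_def)
      hence "w \<in> ball 0 r" using r by (simp add: \<rho>_def)
      thus "w \<in> supp g" using r by blast
    qed
    have Ffin: "finite F" and Fne: "F \<noteq> {}" by (auto simp: F_def)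
    define \<beta> where "\<beta> = Min (g ` F)"
    have \<beta>le: "\<And>w. w \<in> F \<Longrightarrow> \<beta> \<le> g w" using Ffin by (simp add: \<beta>_def)
    have "\<beta> \<in> g ` F" using Ffin Fne by (simp add: \<beta>_def)
    hence \<beta>: "\<beta> > 0" using Fs by (auto simp: supp_def)
    obtain B where B: "\<And>x. x \<in> closure (supp g) \<Longrightarrow> norm x \<le> B"
      using bounded_closure[OF bnd] unfolding bounded_iff by blast
    define D where "D = max 0 (- m - ln \<beta>)"
    define K where "K = 1 + D / \<alpha>"
    have D: "D \<ge> 0" by (simp add: D_def)
    have K1: "K \<ge> 1" using D \<alpha> by (simp add: K_def)
    have claim: "norm ub \<le> B + exp (- m) \<and> \<bar>s\<bar> \<le> 1 / (\<alpha> * c) \<and>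
        (\<forall>w\<in>F. inner v w \<le> K)"
      if mem: "(ub, (v, s)) \<in> reduced_contact_pairs g g" and uU: "fst ub \<in> U" for ub v s
    proof -
      from mem obtain u where ub: "ub = (u, g u)" and uc: "u \<in> closure (supp g)"
        and vb: "(v, s) \<in> normal_cone (lift g) (u, g u)" and one: "inner (v, s) (u, g u) = 1"
        and alt: "g u \<noteq> 0 \<or> (g u = 0 \<and> s = 0)"
        unfolding reduced_contact_pairs_def contact_pairs_def by auto
      have one': "inner v u + s * g u = 1" using one by simp
      have guM: "g u \<le> exp (- m)"
      proof (cases "g u > 0")
        case True
        hence "ln (g u) \<le> - m" using m by force
        hence "exp (ln (g u)) \<le> exp (- m)" by simp
        thus ?thesis using True by simp
      next
        case False thus ?thesis using nn by (smt (verit) exp_gt_zero)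
      qed
      have nub: "norm ub \<le> B + exp (- m)"
      proof -
        have "norm ub \<le> norm u + norm (g u)" unfolding ub by (rule norm_Pair_le)
        also have "\<dots> \<le> B + exp (- m)" using B[OF uc] guM nn by (simp add: abs_of_nonneg)
        finally show ?thesis .
      qed
      show ?thesis
      proof (cases "g u > 0")
        case gu: True
        have uS: "u \<in> supp g" using gu by (simp add: supp_def)
        have cu: "c \<le> g u" using c(2)[OF _ uS] uU ub by simp
        have s: "s \<ge> 0" using s_nonneg[of g u v s] gu vb by simp
        define P where "P = s * g u"
        have P: "P \<ge> 0" using s gu by (simp add: P_def)
        have k0: "inner v (0 - u) + P * (ln (g 0) - ln (g u)) \<le> 0"
          using key[OF lc gu g0 vb] by (simp add: P_def mult.assoc)
        have "P * (ln (g 0) - ln (g u)) \<ge> P * (\<alpha> - 1)"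
          using lnb[OF gu] P by (intro mult_left_mono) auto
        hence "1 \<ge> P * \<alpha>" using k0 one' by (simp add: P_def algebra_simps)
        hence P\<alpha>: "P \<le> 1 / \<alpha>" using \<alpha> by (simp add: field_simps)
        have "s * c \<le> P" unfolding P_def using s cu by (simp add: mult_left_mono)
        hence "s * c \<le> 1 / \<alpha>" using P\<alpha> by linarith
        hence sb: "\<bar>s\<bar> \<le> 1 / (\<alpha> * c)" using s c(1) \<alpha> by (simp add: field_simps)
        have "\<forall>w\<in>F. inner v w \<le> K"
        proof
          fix w assume wF: "w \<in> F"
          have gw: "g w \<ge> \<beta>" using \<beta>le[OF wF] .
          hence gw0: "g w > 0" using \<beta> by simp
          have k: "inner v (w - u) + P * (ln (g w) - ln (g u)) \<le> 0"
            using key[OF lc gu gw0 vb] by (simp add: P_def mult.assoc)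
          have lw: "ln (g w) \<ge> ln \<beta>" using gw \<beta> by simp
          have lu: "ln (g u) \<le> - m" using m[OF gu] by simp
          have "ln (g u) - ln (g w) - 1 \<le> D" using lw lu by (simp add: D_def)
          hence "P * (ln (g u) - ln (g w) - 1) \<le> P * D" using P by (intro mult_left_mono)
          also have "\<dots> \<le> (1 / \<alpha>) * D" using P\<alpha> D by (intro mult_right_mono)
          finally have A: "P * (ln (g u) - ln (g w) - 1) \<le> D / \<alpha>" by simp
          have "inner v w \<le> 1 + P * (ln (g u) - ln (g w) - 1)"
            using k one' by (simp add: P_def inner_diff_right algebra_simps)
          thus "inner v w \<le> K" using A by (simp add: K_def)
        qed
        thus ?thesis using nub sb by simp
      next
        case False
        hence gu: "g u = 0" using nn by (smt (verit))
        hence s: "s = 0" using alt by simp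
        have iu: "inner v u = 1" using one' s by simp
        have "\<forall>w\<in>F. inner v w \<le> K"
        proof
          fix w assume "w \<in> F"
          hence "w \<in> supp g" using Fs by blast
          hence "inner v (w - u) \<le> 0" using key0[OF lc nn uc gu _ vb] by simp
          thus "inner v w \<le> K" using iu K1 by (simp add: inner_diff_right)
        qed
        moreover have "\<bar>s\<bar> \<le> 1 / (\<alpha> * c)" using s \<alpha> c(1) by simp
        ultimately show ?thesis using nub by simp
      qed
    qed
    define V where "V = real DIM('a) * (K / \<rho>)"
    show ?thesis unfolding bounded_iff
    proof (intro exI ballI)
      fix z assume z: "z \<in> {(ub, vb) \<in> reduced_contact_pairs g g. fst ub \<in> U}"
      obtain ub v s where zz: "z = (ub, (v, s))" by (cases z) auto
      have C: "norm ub \<le> B + exp (- m)" "\<bar>s\<bar> \<le> 1 / (\<alpha> * c)" "\<forall>w\<in>F. inner v w \<le> K"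
        using claim[of ub v s] z zz by auto
      have "\<And>b. b \<in> Basis \<Longrightarrow> \<bar>inner v b\<bar> \<le> K / \<rho>"
      proof -
        fix b :: 'a assume b: "b \<in> Basis"
        have "\<rho> *\<^sub>R b \<in> F" "- (\<rho> *\<^sub>R b) \<in> F" using b by (auto simp: F_def)
        hence "\<rho> * inner v b \<le> K" "- (\<rho> * inner v b) \<le> K" using C(3) by auto
        hence "\<rho> * \<bar>inner v b\<bar> \<le> K" by (simp add: abs_if)
        thus "\<bar>inner v b\<bar> \<le> K / \<rho>" using \<rho> by (simp add: field_simps)
      qed
      hence "(\<Sum>b\<in>Basis. \<bar>inner v b\<bar>) \<le> V"
        unfolding V_def using sum_bounded_above[of Basis "\<lambda>b. \<bar>inner v b\<bar>" "K / \<rho>"] by simp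
      hence nv: "norm v \<le> V" using norm_le_l1[of v] by linarith
      have "norm z \<le> norm ub + norm (v, s)" unfolding zz by (rule norm_Pair_le)
      also have "norm (v, s) \<le> norm v + norm s" by (rule norm_Pair_le)
      finally show "norm z \<le> B + exp (- m) + (V + 1 / (\<alpha> * c))" using C nv by simp
    qed
  qed
  show ?thesis using part1 part2 by blast
qed

end
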